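(* Let $\mathcal{K}$ be a compact second-countable Hausdorff space, let $\mathcal{C}$ be the set of continuous functions $\mathcal{K}\to\mathbb{R}$, and let $\mathcal{F}\subseteq\mathcal{C}$ be a generating system. For every $\mathcal{F}$-moment function sequence $w=(w_f:f\in\mathcal{F})$ there is a $\mathcal{K}$-graphon $W$ whose $\mathcal{F}$-moment representation is $w$, i.e. $\int_{\mathcal{K}}f\,dW(x,y)=w_f(x,y)$ for all $f\in\mathcal{F}$ and $x,y\in[0,1]$.
   Context: A generating system is a subset of $\mathcal{C}$ whose linear span is dense in $\mathcal{C}$ in supremum norm. An $\mathcal{F}$-moment sequence is a family $(a_f:f\in\mathcal{F})$ of reals of the form $a_f=\int_{\mathcal{K}}f\,d\mu$ for some Borel probability measure $\mu$ on $\mathcal{K}$. An $\mathcal{F}$-moment function sequence is a family $(w_f:f\in\mathcal{F})$ of bounded symmetric measurable functions $w_f:[0,1]^2\to\mathbb{R}$ such that $(w_f(x,y):f\in\mathcal{F})$ is an $\mathcal{F}$-moment sequence for all $x,y\in[0,1]$. Let $\mathcal{P}(\mathcal{K})$ be the space of Borel probability measures on $\mathcal{K}$ with the weak topology. A $\mathcal{K}$-graphon is a Borel measurable map $W:[0,1]^2\to\mathcal{P}(\mathcal{K})$ with $W(x,y)=W(y,x)$; its $\mathcal{F}$-moment representation is $(W_f:f\in\mathcal{F})$ with $W_f(x,y)=\int_{\mathcal{K}}f\,dW(x,y)$. *)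

theory Defs
  imports "HOL-Analysis.Analysis" "HOL-Probability.Probability"
begin

definition cont_funs :: "('k::topological_space \<Rightarrow> real) set" where
  "cont_funs = {f. continuous_on UNIV f}"

definition generating_system :: "('k::topological_space \<Rightarrow> real) set \<Rightarrow> bool" where
  "generating_system F \<longleftrightarrow> F \<subseteq> cont_funs \<and>
     (\<forall>g\<in>cont_funs. \<forall>e>0. \<exists>G c. finite G \<and> G \<subseteq> F \<and>
         (\<forall>x. \<bar>g x - (\<Sum>f\<in>G. c f * f x)\<bar> < e))"

definition borel_prob_measures :: "'k::topological_space measure set" where
  "borel_prob_measures = {M. sets M = sets borel \<and> prob_space M}"

definition weak_topology :: "'k::topological_space measure topology" where
  "weak_topology = topology_generated_by
     {{M \<in> borel_prob_measures. (\<integral>x. f x \<partial>M) \<in> U} | f U. f \<in> cont_funs \<and> open U}"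

definition borel_of :: "'a topology \<Rightarrow> 'a measure" where
  "borel_of T = sigma (topspace T) {U. openin T U}"

definition unit_square :: "(real \<times> real) measure" where
  "unit_square = restrict_space borel ({0..1} \<times> {0..1})"

definition moment_sequence :: "('k::topological_space \<Rightarrow> real) set \<Rightarrow> (('k \<Rightarrow> real) \<Rightarrow> real) \<Rightarrow> bool" where
  "moment_sequence F a \<longleftrightarrow> (\<exists>\<mu>\<in>borel_prob_measures. \<forall>f\<in>F. a f = (\<integral>x. f x \<partial>\<mu>))"

definition moment_function_sequence ::
  "('k::topological_space \<Rightarrow> real) set \<Rightarrow> (('k \<Rightarrow> real) \<Rightarrow> real \<Rightarrow> real \<Rightarrow> real) \<Rightarrow> bool" where
  "moment_function_sequence F w \<longleftrightarrow>
     (\<forall>f\<in>F. (\<lambda>(x,y). w f x y) \<in> borel_measurable unit_square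
         \<and> (\<exists>B. \<forall>x\<in>{0..1}. \<forall>y\<in>{0..1}. \<bar>w f x y\<bar> \<le> B)
         \<and> (\<forall>x\<in>{0..1}. \<forall>y\<in>{0..1}. w f x y = w f y x))
     \<and> (\<forall>x\<in>{0..1}. \<forall>y\<in>{0..1}. moment_sequence F (\<lambda>f. w f x y))"

definition K_graphon :: "(real \<Rightarrow> real \<Rightarrow> 'k::topological_space measure) \<Rightarrow> bool" where
  "K_graphon W \<longleftrightarrow>
     (\<lambda>(x,y). W x y) \<in> unit_square \<rightarrow>\<^sub>M borel_of (weak_topology :: 'k measure topology)
     \<and> (\<forall>x\<in>{0..1}. \<forall>y\<in>{0..1}. W x y = W y x)"

end

theory Submission
  imports Defs
begin


lemma cont_bounded:
  fixes g :: "'k::topological_space \<Rightarrow> real"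
  assumes "compact (UNIV::'k set)" "continuous_on UNIV g"
  shows "\<exists>B. \<forall>x. \<bar>g x\<bar> \<le> B"
proof -
  have "compact (range g)" using compact_continuous_image assms by blast
  then have "bounded (range g)" by (rule compact_imp_bounded)
  then show ?thesis unfolding bounded_iff by auto
qed

lemma cont_integrable:
  fixes g :: "'k::topological_space \<Rightarrow> real"
  assumes "compact (UNIV::'k set)" "M \<in> borel_prob_measures" "g \<in> cont_funs"
  shows "integrable M g"
proof -
  from assms(2) have sM: "sets M = sets borel" and P: "prob_space M"
    by (auto simp: borel_prob_measures_def)
  have c: "continuous_on UNIV g" using assms(3) by (simp add: cont_funs_def)
  have "g \<in> borel_measurable borel" using c borel_measurable_continuous_onI by blast
  then have m: "g \<in> borel_measurable M" using sM measurable_cong_sets by blast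
  obtain B where B: "\<forall>x. \<bar>g x\<bar> \<le> B" using cont_bounded[OF assms(1) c] by blast
  show ?thesis
    using finite_measure.integrable_const_bound[OF prob_space.finite_measure[OF P], of g B] m B by auto
qed

lemma integral_abs_le:
  fixes f :: "'k::topological_space \<Rightarrow> real"
  assumes "M \<in> borel_prob_measures" "integrable M f" "\<And>x. \<bar>f x\<bar> \<le> e"
  shows "\<bar>\<integral>x. f x \<partial>M\<bar> \<le> e"
proof -
  from assms(1) have P: "prob_space M"
    by (auto simp: borel_prob_measures_def)
  have "\<bar>\<integral>x. f x \<partial>M\<bar> \<le> (\<integral>x. \<bar>f x\<bar> \<partial>M)" by (rule integral_abs_bound)
  also have "\<dots> \<le> e"
    using assms prob_space.integral_le_const[OF P, of "\<lambda>x. \<bar>f x\<bar>" e] by auto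
  finally show ?thesis .
qed

lemma sep_countable:
  assumes cK: "compact (UNIV::'k::{second_countable_topology,t2_space} set)"
  shows "\<exists>G0. countable G0 \<and> G0 \<subseteq> (cont_funs::('k \<Rightarrow> real) set) \<and> (\<forall>x y. x \<noteq> y \<longrightarrow> (\<exists>g\<in>G0. g x \<noteq> g y))"
proof -
  obtain B :: "'k set set" where Bc: "countable B" and Bb: "topological_basis B"
    using ex_countable_basis by blast
  define P where "P U V f \<longleftrightarrow> continuous_on UNIV f \<and> (\<forall>x\<in>U. f x = (0::real)) \<and> (\<forall>x. x \<notin> V \<longrightarrow> f x = 1)"
    for U V :: "'k set" and f
  define S where "S = {p\<in>B \<times> B. \<exists>f. P (fst p) (snd p) f}"
  define G0 where "G0 = (\<lambda>p. SOME f. P (fst p) (snd p) f) ` S"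
  have "countable G0"
  proof -
    have "S \<subseteq> B \<times> B" unfolding S_def by (rule Collect_restrict)
    then have "countable S"
      using countable_subset[OF _ countable_SIGMA[OF Bc Bc]] by blast
    then show ?thesis unfolding G0_def by (rule countable_image)
  qed
  moreover have "G0 \<subseteq> cont_funs"
  proof
    fix g assume "g \<in> G0"
    then obtain U V where "\<exists>f. P U V f" "g = (SOME f. P U V f)" unfolding G0_def S_def by auto
    then have "P U V g" using someI_ex by metis
    then show "g \<in> cont_funs" by (simp add: P_def cont_funs_def)
  qed
  moreover have N: "normal_space (euclidean::'k topology)"
  proof (rule compact_Hausdorff_or_regular_imp_normal_space)
    show "compact_space (euclidean::'k topology)" using cK by (simp add: compact_space_def)
    show "Hausdorff_space (euclidean::'k topology) \<or> regular_space (euclidean::'k topology)"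
      unfolding Hausdorff_space_def using hausdorff by (metis disjnt_def open_openin)
  qed
  moreover have "\<exists>g\<in>G0. g x \<noteq> g y" if xy: "x \<noteq> y" for x y
  proof -
    have "open (-{y})" by (simp add: open_Compl)
    moreover have "x \<in> -{y}" using xy by simp
    ultimately obtain V where V: "V \<in> B" "x \<in> V" "V \<subseteq> -{y}"
      using Bb by (meson topological_basisE)
    have oV: "open V" using Bb V(1) topological_basis_open by blast
    have "closedin euclidean {x}" "closedin euclidean (-V)" "disjnt {x} (-V)"
      using oV V by (auto simp: disjnt_def)
    then obtain U' Q where U'Q: "open U'" "open Q" "{x} \<subseteq> U'" "-V \<subseteq> Q" "disjnt U' Q"
      using N unfolding normal_space_def by (metis open_openin)
    obtain U where U: "U \<in> B" "x \<in> U" "U \<subseteq> U'"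
      using Bb U'Q by (meson insert_subset topological_basisE)
    have "closure U \<subseteq> -Q"
      using U U'Q by (intro closure_minimal) (auto simp: disjnt_def)
    then have "disjnt (closure U) (-V)" using U'Q by (auto simp: disjnt_def)
    then obtain f where f: "continuous_map euclidean euclideanreal f" "f ` closure U \<subseteq> {0}" "f ` (-V) \<subseteq> {1}"
      using Urysohn_lemma_alt[OF N, of "closure U" "-V" 0 1] oV by auto
    have "P U V f" unfolding P_def
      using f closure_subset[of U] by fastforce
    then have ex: "\<exists>f. P U V f" by blast
    define g where "g = (SOME f. P U V f)"
    have "P U V g" using ex someI_ex g_def by metis
    moreover have "(U,V) \<in> S" unfolding S_def using U V ex by auto
    then have "g \<in> G0" unfolding G0_def g_def by force
    ultimately show ?thesis using U V unfolding P_def by (metis ComplD in_mono singletonI zero_neq_one)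
  qed
  ultimately show ?thesis by blast
qed

datatype fexpr = Gen nat | Cst rat | Add fexpr fexpr | Mul fexpr fexpr

instance fexpr :: countable by countable_datatype

fun feval :: "(nat \<Rightarrow> 'k \<Rightarrow> real) \<Rightarrow> fexpr \<Rightarrow> 'k \<Rightarrow> real" where
  "feval g (Gen n) x = g n x"
| "feval g (Cst q) x = real_of_rat q"
| "feval g (Add a b) x = feval g a x + feval g b x"
| "feval g (Mul a b) x = feval g a x * feval g b x"

lemma feval_cont:
  fixes g :: "nat \<Rightarrow> 'k::topological_space \<Rightarrow> real"
  assumes "\<And>n. continuous_on UNIV (g n)"
  shows "continuous_on UNIV (feval g e)"
proof (induction e)
  case (Gen n) then show ?case using assms by (metis (no_types) ext feval.simps(1))
next
  case (Cst q) then show ?case by (simp add: continuous_on_const)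
next
  case (Add a b)
  have "continuous_on UNIV (\<lambda>x. feval g a x + feval g b x)" using Add by (intro continuous_on_add) auto
  then show ?case by simp
next
  case (Mul a b)
  have "continuous_on UNIV (\<lambda>x. feval g a x * feval g b x)" using Mul by (intro continuous_on_mult) auto
  then show ?case by simp
qed

lemma mult_approx:
  fixes fa fb ha hb :: "'k \<Rightarrow> real"
  assumes B1: "\<And>x. \<bar>fa x\<bar> \<le> B1" and B2: "\<And>x. \<bar>fb x\<bar> \<le> B2"
    and d: "d = min 1 (e / (B1 + B2 + 2))" and e: "e > 0"
    and ha: "\<And>x. \<bar>fa x - ha x\<bar> < d" and hb: "\<And>x. \<bar>fb x - hb x\<bar> < d"
  shows "\<bar>fa x * fb x - ha x * hb x\<bar> < e"
proof -
  have B1p: "B1 \<ge> 0" using B1[of x] by linarith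
  have B2p: "B2 \<ge> 0" using B2[of x] by linarith
  have dp: "d > 0" using d e B1p B2p by auto
  have d1: "d \<le> 1" using d by auto
  have de: "d * (B1 + B2 + 2) \<le> e" using d B1p B2p e
    by (smt (verit, ccfv_SIG) divide_pos_pos min.cobounded2 mult_left_mono_neg nonzero_divide_eq_eq pos_le_divide_eq)
  have h2b: "\<bar>hb x\<bar> \<le> B2 + 1" using B2[of x] hb[of x] d1 by linarith
  have eq: "fa x * fb x - ha x * hb x = fa x * (fb x - hb x) + (fa x - ha x) * hb x"
    by (simp add: algebra_simps)
  have "\<bar>fa x * (fb x - hb x)\<bar> \<le> B1 * d"
    unfolding abs_mult using B1[of x] hb[of x] B1p by (intro mult_mono) auto
  moreover have "\<bar>(fa x - ha x) * hb x\<bar> \<le> d * (B2 + 1)"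
    unfolding abs_mult using ha[of x] h2b dp by (intro mult_mono) auto
  ultimately have "\<bar>fa x * fb x - ha x * hb x\<bar> \<le> B1 * d + d * (B2 + 1)"
    unfolding eq by linarith
  also have "\<dots> < d * (B1 + B2 + 2)" using dp by (simp add: algebra_simps)
  finally show ?thesis using de by linarith
qed


lemma C_separable:
  assumes cK: "compact (UNIV::'k::{second_countable_topology,t2_space} set)"
  shows "\<exists>H. countable H \<and> H \<subseteq> (cont_funs::('k \<Rightarrow> real) set) \<and>
     (\<forall>f\<in>cont_funs. \<forall>e>0. \<exists>h\<in>H. \<forall>x. \<bar>f x - h x\<bar> < e)"
proof -
  obtain G0 where G0c: "countable G0" and G0C: "G0 \<subseteq> (cont_funs::('k \<Rightarrow> real) set)"
    and G0s: "\<And>x y. x \<noteq> y \<Longrightarrow> \<exists>g\<in>G0. g x \<noteq> g y"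
    using sep_countable[OF cK] by (elim exE conjE) (rule that, auto)
  define G1 where "G1 = insert (\<lambda>_. 0) G0"
  define g where "g = from_nat_into G1"
  have rg: "range g = G1" unfolding g_def G1_def
    using G0c by (intro range_from_nat_into) auto
  have gc: "continuous_on UNIV (g n)" for n
  proof -
    have "g n \<in> G1" using rg by auto
    then show ?thesis using G0C unfolding G1_def cont_funs_def by (auto simp: continuous_on_const)
  qed
  define H where "H = range (feval g)"
  have Hc: "countable H" unfolding H_def by simp
  have HC: "H \<subseteq> cont_funs" unfolding H_def cont_funs_def using feval_cont[OF gc] by auto
  define R where "R = {f. continuous_on UNIV f \<and> (\<forall>e>0. \<exists>h\<in>H. \<forall>x. \<bar>f x - h x\<bar> < e)}"
  have Rapp: "\<exists>a. \<forall>x. \<bar>f x - feval g a x\<bar> < e" if "f \<in> R" "e > 0" for f e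
  proof -
    have "\<exists>h\<in>H. \<forall>x. \<bar>f x - h x\<bar> < e" using that unfolding R_def by simp
    then obtain h where h: "h \<in> H" "\<forall>x. \<bar>f x - h x\<bar> < e" by blast
    from h(1) obtain a where "h = feval g a" unfolding H_def by blast
    then show ?thesis using h(2) by blast
  qed
  interpret fr: function_ring_on R UNIV
  proof
    show "compact (UNIV::'k set)" by (rule cK)
    show "continuous_on UNIV f" if "f \<in> R" for f using that unfolding R_def by auto
    show "(\<lambda>x. f x + f' x) \<in> R" if "f \<in> R" "f' \<in> R" for f f'
    proof -
      have c: "continuous_on UNIV (\<lambda>x. f x + f' x)"
        using that unfolding R_def by (auto intro: continuous_on_add)
      have "\<exists>h\<in>H. \<forall>x. \<bar>f x + f' x - h x\<bar> < e" if e: "e > 0" for e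
      proof -
        obtain a where a: "\<forall>x. \<bar>f x - feval g a x\<bar> < e/2"
          using Rapp[OF \<open>f \<in> R\<close>] e by (meson half_gt_zero)
        obtain b where b: "\<forall>x. \<bar>f' x - feval g b x\<bar> < e/2"
          using Rapp[OF \<open>f' \<in> R\<close>] e by (meson half_gt_zero)
        have "\<forall>x. \<bar>f x + f' x - feval g (Add a b) x\<bar> < e"
        proof
          fix x show "\<bar>f x + f' x - feval g (Add a b) x\<bar> < e" using a[rule_format, of x] b[rule_format, of x] unfolding abs_less_iff feval.simps by linarith
        qed
        then show ?thesis unfolding H_def by blast
      qed
      then show ?thesis using c unfolding R_def by auto
    qed
    show "(\<lambda>x. f x * f' x) \<in> R" if "f \<in> R" "f' \<in> R" for f f'
    proof -
      have c: "continuous_on UNIV (\<lambda>x. f x * f' x)"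
        using that unfolding R_def by (auto intro: continuous_on_mult)
      obtain B1 where B1: "\<And>x. \<bar>f x\<bar> \<le> B1"
        using cont_bounded[OF cK, of f] \<open>f \<in> R\<close> unfolding R_def by blast
      obtain B2 where B2: "\<And>x. \<bar>f' x\<bar> \<le> B2"
        using cont_bounded[OF cK, of f'] \<open>f' \<in> R\<close> unfolding R_def by blast
      have "\<exists>h\<in>H. \<forall>x. \<bar>f x * f' x - h x\<bar> < e" if e: "e > 0" for e
      proof -
        define d where "d = min 1 (e / (B1 + B2 + 2))"
        have B1p: "B1 \<ge> 0" using B1[of undefined] by linarith
        have B2p: "B2 \<ge> 0" using B2[of undefined] by linarith
        have dp: "d > 0" using e B1p B2p unfolding d_def by auto
        obtain a where a: "\<forall>x. \<bar>f x - feval g a x\<bar> < d"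
          using Rapp[OF \<open>f \<in> R\<close> dp] by blast
        obtain b where b: "\<forall>x. \<bar>f' x - feval g b x\<bar> < d"
          using Rapp[OF \<open>f' \<in> R\<close> dp] by blast
        have "\<forall>x. \<bar>f x * f' x - feval g (Mul a b) x\<bar> < e"
          using mult_approx[where fa=f and fb=f' and ha="feval g a" and hb="feval g b", OF B1 B2 d_def e] a b by simp
        then show ?thesis unfolding H_def by blast
      qed
      then show ?thesis using c unfolding R_def by auto
    qed
    show "(\<lambda>_. c) \<in> R" for c
    proof -
      have "\<exists>h\<in>H. \<forall>x. \<bar>c - h x\<bar> < e" if e: "e > 0" for e
      proof -
        obtain r where r: "r \<in> \<rat>" "c - e < r" "r < c" using Rats_dense_in_real[of "c - e" c] e by auto
        then obtain q where q: "r = real_of_rat q" using Rats_cases by blast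
        have "\<forall>x. \<bar>c - feval g (Cst q) x\<bar> < e" using r q by auto
        then show ?thesis unfolding H_def by blast
      qed
      then show ?thesis unfolding R_def by (auto simp: continuous_on_const)
    qed
    show "\<exists>f\<in>R. f x \<noteq> f y" if "x \<in> UNIV" "y \<in> UNIV" "x \<noteq> y" for x y
    proof -
      obtain g0 where g0: "g0 \<in> G0" "g0 x \<noteq> g0 y" using G0s \<open>x \<noteq> y\<close> by blast
      then obtain n where n: "g0 = g n" using rg unfolding G1_def by auto
      have "feval g (Gen n) = g0" using n by auto
      then have "g0 \<in> H" unfolding H_def by (metis rangeI)
      then have "g0 \<in> R" unfolding R_def using gc n by force
      then show ?thesis using g0 by blast
    qed
  qed
  have "\<forall>f\<in>cont_funs. \<forall>e>0. \<exists>h\<in>H. \<forall>x. \<bar>f x - h x\<bar> < e"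
  proof (intro ballI allI impI)
    fix f :: "'k \<Rightarrow> real" and e :: real
    assume f: "f \<in> cont_funs" and e: "e > 0"
    then obtain F where F: "F \<in> UNIV \<rightarrow> R" "uniform_limit UNIV F f sequentially"
      using fr.Stone_Weierstrass unfolding cont_funs_def by blast
    then have "\<forall>\<^sub>F n in sequentially. \<forall>x\<in>UNIV. dist (F n x) (f x) < e/2"
      using F(2) e unfolding uniform_limit_iff by (meson half_gt_zero)
    then obtain N where N: "\<And>n. n \<ge> N \<Longrightarrow> \<forall>x\<in>UNIV. dist (F n x) (f x) < e/2"
      unfolding eventually_sequentially by blast
    define n where "n = N"
    have n: "\<forall>x. dist (F n x) (f x) < e/2" using N[of N] unfolding n_def by simp
    have "F n \<in> R" using F by auto
    then obtain a where a: "\<forall>x. \<bar>F n x - feval g a x\<bar> < e/2"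
      using Rapp e by (meson half_gt_zero)
    define h where "h = feval g a"
    have h: "h \<in> H" "\<forall>x. \<bar>F n x - h x\<bar> < e/2" using a unfolding h_def H_def by auto
    have "\<forall>x. \<bar>f x - h x\<bar> < e"
    proof
      fix x show "\<bar>f x - h x\<bar> < e" using n[rule_format, of x] h(2)[rule_format, of x] unfolding dist_real_def abs_less_iff by linarith
    qed
    then show "\<exists>h\<in>H. \<forall>x. \<bar>f x - h x\<bar> < e" using h by blast
  qed
  then show ?thesis using Hc HC by blast
qed


lemma nbhd_lemma:
  fixes H :: "('k::topological_space \<Rightarrow> real) set"
  assumes cK: "compact (UNIV::'k set)"
    and HC: "H \<subseteq> cont_funs"
    and Happ: "\<forall>f\<in>cont_funs. \<forall>e>0. \<exists>h\<in>H. \<forall>x. \<bar>f x - h x\<bar> < e"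
    and Sb: "Sb = {{M \<in> borel_prob_measures. (\<integral>x. f x \<partial>M) \<in> U} | f U. f \<in> cont_funs \<and> open U}"
    and Bc: "Bc = {{M \<in> borel_prob_measures. (\<integral>x. h x \<partial>M) \<in> {a<..<b}} | h a b. h \<in> H \<and> a \<in> \<rat> \<and> b \<in> \<rat>}"
    and BB: "BB = {borel_prob_measures \<inter> \<Inter>T | T. T \<subseteq> Bc \<and> finite T}"
    and Op: "generate_topology_on Sb Op"
  shows "\<forall>M\<in>Op. \<exists>b\<in>BB. M \<in> b \<and> b \<subseteq> Op"
  using Op
proof (induction rule: generate_topology_on.induct)
  case Empty
  then show ?case by simp
next
  case (Int a b)
  show ?case
  proof
    fix M assume M: "M \<in> a \<inter> b"
    obtain b1 where b1: "b1 \<in> BB" "M \<in> b1" "b1 \<subseteq> a" using Int.IH(1) M by blast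
    obtain b2 where b2: "b2 \<in> BB" "M \<in> b2" "b2 \<subseteq> b" using Int.IH(2) M by blast
    have "\<exists>T. b1 = borel_prob_measures \<inter> \<Inter>T \<and> T \<subseteq> Bc \<and> finite T" using b1(1) unfolding BB by simp
    then obtain T1 where T1: "b1 = borel_prob_measures \<inter> \<Inter>T1" "T1 \<subseteq> Bc" "finite T1" by blast
    have "\<exists>T. b2 = borel_prob_measures \<inter> \<Inter>T \<and> T \<subseteq> Bc \<and> finite T" using b2(1) unfolding BB by simp
    then obtain T2 where T2: "b2 = borel_prob_measures \<inter> \<Inter>T2" "T2 \<subseteq> Bc" "finite T2" by blast
    have eq: "b1 \<inter> b2 = borel_prob_measures \<inter> \<Inter>(T1 \<union> T2)" unfolding T1(1) T2(1) Inter_Un_distrib by blast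
    have "b1 \<inter> b2 \<in> BB" unfolding BB mem_Collect_eq eq
      by (rule exI[of _ "T1 \<union> T2"]) (use T1 T2 in auto)
    then show "\<exists>b'\<in>BB. M \<in> b' \<and> b' \<subseteq> a \<inter> b"
      by (intro bexI[of _ "b1 \<inter> b2"]) (use b1 b2 in auto)
  qed
next
  case (UN K)
  show ?case
  proof
    fix M assume "M \<in> \<Union>K"
    then obtain k where k: "k \<in> K" "M \<in> k" by (rule UnionE)
    then obtain b where "b \<in> BB" "M \<in> b" "b \<subseteq> k" using UN.IH[OF k(1)] by auto
    then show "\<exists>b\<in>BB. M \<in> b \<and> b \<subseteq> \<Union>K" using k(1) by (intro bexI[of _ b]) auto
  qed
next
  case (Basis s)
  then have "\<exists>f U. s = {M \<in> borel_prob_measures. (\<integral>x. f x \<partial>M) \<in> U} \<and> f \<in> cont_funs \<and> open U"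
    unfolding Sb by simp
  then obtain f U where s: "s = {M \<in> borel_prob_measures. (\<integral>x. f x \<partial>M) \<in> U}"
    and f: "f \<in> cont_funs" and U: "open U" by (elim exE conjE)
  show ?case
  proof
    fix M0 assume M0: "M0 \<in> s"
    define t0 where "t0 = (\<integral>x. f x \<partial>M0)"
    have "t0 \<in> U" using M0 s t0_def by auto
    then obtain r where r: "r > 0" "ball t0 r \<subseteq> U" using U open_contains_ball by blast
    define e where "e = r / 3"
    have e: "e > 0" using r e_def by auto
    obtain h where h: "h \<in> H" "\<forall>x. \<bar>f x - h x\<bar> < e" using Happ f e by meson
    have hC: "h \<in> cont_funs" using h HC by auto
    define x0 where "x0 = (\<integral>x. h x \<partial>M0)"
    obtain a where a: "a \<in> \<rat>" "x0 - e < a" "a < x0" using Rats_dense_in_real[of "x0 - e" x0] e by auto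
    obtain b where b: "b \<in> \<rat>" "x0 < b" "b < x0 + e" using Rats_dense_in_real[of x0 "x0 + e"] e by auto
    define t where "t = {M \<in> borel_prob_measures. (\<integral>x. h x \<partial>M) \<in> {a<..<b}}"
    have tBc: "t \<in> Bc" unfolding Bc t_def mem_Collect_eq
      by (intro exI[of _ h] exI[of _ a] exI[of _ b]) (use h a b in auto)
    have tB: "borel_prob_measures \<inter> \<Inter>{t} \<in> BB" unfolding BB mem_Collect_eq
      by (intro exI[of _ "{t}"]) (use tBc in auto)
    have M0b: "M0 \<in> borel_prob_measures" using M0 s by auto
    have diffb: "\<bar>(\<integral>x. f x \<partial>M) - (\<integral>x. h x \<partial>M)\<bar> \<le> e" if M: "M \<in> borel_prob_measures" for M
    proof -
      have "(\<integral>x. f x \<partial>M) - (\<integral>x. h x \<partial>M) = (\<integral>x. f x - h x \<partial>M)"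
        using cont_integrable[OF cK M f] cont_integrable[OF cK M hC] by simp
      also have "\<bar>\<dots>\<bar> \<le> e"
        using integral_abs_le[OF M, of "\<lambda>x. f x - h x" e] h cont_integrable[OF cK M f] cont_integrable[OF cK M hC]
        by (simp add: less_imp_le)
      finally show ?thesis .
    qed
    have sub: "borel_prob_measures \<inter> \<Inter>{t} \<subseteq> s"
    proof
      fix M assume "M \<in> borel_prob_measures \<inter> \<Inter>{t}"
      then have M: "M \<in> borel_prob_measures" "(\<integral>x. h x \<partial>M) \<in> {a<..<b}" unfolding t_def by auto
      have "\<bar>(\<integral>x. f x \<partial>M) - t0\<bar> < r"
      proof -
        have A: "\<bar>(\<integral>x. f x \<partial>M) - (\<integral>x. h x \<partial>M)\<bar> \<le> e" using diffb[OF M(1)] .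
        have B: "\<bar>t0 - x0\<bar> \<le> e" using diffb[OF M0b] unfolding t0_def x0_def .
        have C: "x0 - e < (\<integral>x. h x \<partial>M)" "(\<integral>x. h x \<partial>M) < x0 + e" using M(2) a b by auto
        have "3 * e = r" unfolding e_def by simp
        then show ?thesis using A B C unfolding abs_le_iff abs_less_iff by linarith
      qed
      then have "(\<integral>x. f x \<partial>M) \<in> U" using r by (auto simp: dist_real_def abs_minus_commute)
      then show "M \<in> s" using s M by auto
    qed
    have "M0 \<in> borel_prob_measures \<inter> \<Inter>{t}" unfolding t_def using M0b a b x0_def by auto
    then show "\<exists>b\<in>BB. M0 \<in> b \<and> b \<subseteq> s" using tB sub by (intro bexI[of _ "borel_prob_measures \<inter> \<Inter>{t}"]) auto
  qed
qed


theorem lemma6: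
  fixes F :: "('k::{second_countable_topology, t2_space} \<Rightarrow> real) set"
    and w :: "('k \<Rightarrow> real) \<Rightarrow> real \<Rightarrow> real \<Rightarrow> real"
  assumes "compact (UNIV :: 'k set)"
    and "generating_system F"
    and "moment_function_sequence F w"
  shows "\<exists>W :: real \<Rightarrow> real \<Rightarrow> 'k measure. K_graphon W \<and>
           (\<forall>f\<in>F. \<forall>x\<in>{0..1}. \<forall>y\<in>{0..1}. (\<integral>z. f z \<partial>(W x y)) = w f x y)"
proof -
  note cK = assms(1)
  have FC: "F \<subseteq> cont_funs"
    and gen: "\<And>g e. g \<in> cont_funs \<Longrightarrow> e > 0 \<Longrightarrow> \<exists>G c. finite G \<and> G \<subseteq> F \<and>
         (\<forall>x. \<bar>g x - (\<Sum>f\<in>G. c f * f x)\<bar> < e)"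
    using assms(2) unfolding generating_system_def by auto
  have wm: "\<And>f. f \<in> F \<Longrightarrow> (\<lambda>(x,y). w f x y) \<in> borel_measurable unit_square"
    and wsym: "\<And>f x y. f \<in> F \<Longrightarrow> x \<in> {0..1} \<Longrightarrow> y \<in> {0..1} \<Longrightarrow> w f x y = w f y x"
    and ms: "\<And>x y. x \<in> {0..1} \<Longrightarrow> y \<in> {0..1} \<Longrightarrow> moment_sequence F (\<lambda>f. w f x y)"
    using assms(3) unfolding moment_function_sequence_def by auto
  define W :: "real \<Rightarrow> real \<Rightarrow> 'k measure" where
    "W x y = (SOME \<mu>. \<mu> \<in> borel_prob_measures \<and> (\<forall>f\<in>F. w f x y = (\<integral>z. f z \<partial>\<mu>)))" for x y
  have Wp: "W x y \<in> borel_prob_measures \<and> (\<forall>f\<in>F. w f x y = (\<integral>z. f z \<partial>W x y))"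
    if "x \<in> {0..1}" "y \<in> {0..1}" for x y
  proof -
    have "\<exists>\<mu>. \<mu> \<in> borel_prob_measures \<and> (\<forall>f\<in>F. w f x y = (\<integral>z. f z \<partial>\<mu>))"
      using ms[OF that] unfolding moment_sequence_def by blast
    then show ?thesis unfolding W_def by (rule someI_ex)
  qed
  have Wsym: "W x y = W y x" if "x \<in> {0..1}" "y \<in> {0..1}" for x y
  proof -
    have "(\<lambda>\<mu>. \<mu> \<in> borel_prob_measures \<and> (\<forall>f\<in>F. w f x y = (\<integral>z. f z \<partial>\<mu>))) =
          (\<lambda>\<mu>. \<mu> \<in> borel_prob_measures \<and> (\<forall>f\<in>F. w f y x = (\<integral>z. f z \<partial>\<mu>)))"
      using wsym that by (auto intro!: ext)
    then show ?thesis unfolding W_def by simp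
  qed
  have sq: "space unit_square = {0..1} \<times> {0..1}"
    unfolding unit_square_def by (simp add: space_restrict_space)
  have intg: "(\<lambda>p. \<integral>z. g z \<partial>W (fst p) (snd p)) \<in> borel_measurable unit_square"
    if g: "g \<in> cont_funs" for g
  proof -
    have "\<forall>n::nat. \<exists>G c. finite G \<and> G \<subseteq> F \<and> (\<forall>x. \<bar>g x - (\<Sum>f\<in>G. c f * f x)\<bar> < 1 / Suc n)"
      using gen[OF g] by simp
    then have "\<exists>G. \<forall>n. \<exists>c. finite (G n) \<and> G n \<subseteq> F \<and> (\<forall>x. \<bar>g x - (\<Sum>f\<in>G n. c f * f x)\<bar> < 1 / Suc n)"
      by (rule choice)
    then obtain G where "\<forall>n. \<exists>c. finite (G n) \<and> G n \<subseteq> F \<and> (\<forall>x. \<bar>g x - (\<Sum>f\<in>G n. c f * f x)\<bar> < 1 / Suc n)"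
      by blast
    then have "\<exists>c. \<forall>n. finite (G n) \<and> G n \<subseteq> F \<and> (\<forall>x. \<bar>g x - (\<Sum>f\<in>G n. c n f * f x)\<bar> < 1 / Suc n)"
      by (rule choice)
    then obtain c where Gc: "\<And>n. finite (G n) \<and> G n \<subseteq> F \<and> (\<forall>x. \<bar>g x - (\<Sum>f\<in>G n. c n f * f x)\<bar> < 1 / Suc n)"
      by blast
    define u where "u n p = (\<Sum>f\<in>G n. c n f * w f (fst p) (snd p))" for n p
    have um: "u n \<in> borel_measurable unit_square" for n
    proof -
      have "(\<lambda>p. w f (fst p) (snd p)) \<in> borel_measurable unit_square" if "f \<in> G n" for f
      proof -
        have "f \<in> F" using Gc[of n] that by auto
        from wm[OF this] show ?thesis by (simp add: split_beta')
      qed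
      then show ?thesis unfolding u_def
        by (intro borel_measurable_sum borel_measurable_times borel_measurable_const) auto
    qed
    show ?thesis
    proof (rule borel_measurable_LIMSEQ_real[OF _ um])
      fix p assume p: "p \<in> space unit_square"
      define M where "M = W (fst p) (snd p)"
      have pp: "fst p \<in> {0..1}" "snd p \<in> {0..1}" using p sq by (auto simp: mem_Times_iff)
      have M: "M \<in> borel_prob_measures" using Wp[OF pp] M_def by auto
      have bound: "\<bar>u n p - (\<integral>z. g z \<partial>M)\<bar> \<le> 1 / Suc n" for n
      proof -
        have GF: "G n \<subseteq> F" "finite (G n)" using Gc[of n] by auto
        have intf: "integrable M f" if "f \<in> G n" for f
          using cont_integrable[OF cK M] GF FC that by auto
        have "u n p = (\<Sum>f\<in>G n. c n f * (\<integral>z. f z \<partial>M))"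
          unfolding u_def M_def using Wp[OF pp] GF by (intro sum.cong) auto
        also have "\<dots> = (\<integral>z. (\<Sum>f\<in>G n. c n f * f z) \<partial>M)"
          using intf by (simp add: integral_sum)
        finally have "u n p - (\<integral>z. g z \<partial>M) = (\<integral>z. (\<Sum>f\<in>G n. c n f * f z) \<partial>M) - (\<integral>z. g z \<partial>M)" by simp
        also have "\<dots> = (\<integral>z. (\<Sum>f\<in>G n. c n f * f z) - g z \<partial>M)"
          using intf cont_integrable[OF cK M g] by (simp add: integrable_sum)
        finally have eq: "u n p - (\<integral>z. g z \<partial>M) = (\<integral>z. (\<Sum>f\<in>G n. c n f * f z) - g z \<partial>M)" .
        have "\<bar>\<integral>z. (\<Sum>f\<in>G n. c n f * f z) - g z \<partial>M\<bar> \<le> 1 / Suc n"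
        proof (rule integral_abs_le[OF M])
          show "integrable M (\<lambda>z. (\<Sum>f\<in>G n. c n f * f z) - g z)"
            using intf cont_integrable[OF cK M g] by (simp add: integrable_sum)
          show "\<bar>(\<Sum>f\<in>G n. c n f * f z) - g z\<bar> \<le> 1 / Suc n" for z
            using Gc[of n] by (simp add: abs_minus_commute less_imp_le)
        qed
        then show ?thesis using eq by simp
      qed
      have "(\<lambda>n. u n p - (\<integral>z. g z \<partial>M)) \<longlonglongrightarrow> 0"
      proof (rule Lim_null_comparison)
        show "\<forall>\<^sub>F n in sequentially. norm (u n p - (\<integral>z. g z \<partial>M)) \<le> inverse (real (Suc n))"
          using bound by (simp add: inverse_eq_divide)
        show "(\<lambda>n. inverse (real (Suc n))) \<longlonglongrightarrow> 0" by (rule LIMSEQ_inverse_real_of_nat)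
      qed
      then have "(\<lambda>n. u n p - (\<integral>z. g z \<partial>M) + (\<integral>z. g z \<partial>M)) \<longlonglongrightarrow> 0 + (\<integral>z. g z \<partial>M)"
        by (intro tendsto_add tendsto_const)
      then show "(\<lambda>n. u n p) \<longlonglongrightarrow> (\<integral>z. g z \<partial>W (fst p) (snd p))" unfolding M_def by simp
    qed
  qed
  obtain H where Hc: "countable H" and HC: "H \<subseteq> (cont_funs::('k \<Rightarrow> real) set)"
    and Happ: "\<forall>f\<in>cont_funs. \<forall>e>0. \<exists>h\<in>H. \<forall>x. \<bar>f x - h x\<bar> < e"
    using C_separable[OF cK] by (elim exE conjE) (rule that, auto)
  define Sb :: "'k measure set set" where
    "Sb = {{M \<in> borel_prob_measures. (\<integral>x. f x \<partial>M) \<in> U} | f U. f \<in> cont_funs \<and> open U}"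
  define Bc :: "'k measure set set" where
    "Bc = {{M \<in> borel_prob_measures. (\<integral>x. h x \<partial>M) \<in> {a<..<b}} | h a b. h \<in> H \<and> a \<in> \<rat> \<and> b \<in> \<rat>}"
  define BB where "BB = {borel_prob_measures \<inter> \<Inter>T | T. T \<subseteq> Bc \<and> finite T}"
  have wt: "(weak_topology :: 'k measure topology) = topology_generated_by Sb"
    unfolding weak_topology_def Sb_def ..
  have top: "topspace (weak_topology :: 'k measure topology) = borel_prob_measures"
  proof -
    have "\<Union>Sb \<subseteq> borel_prob_measures" unfolding Sb_def by auto
    moreover have "borel_prob_measures \<subseteq> \<Union>Sb"
    proof
      fix M :: "'k measure" assume M: "M \<in> borel_prob_measures"
      have "(\<lambda>_. 0::real) \<in> cont_funs" by (simp add: cont_funs_def continuous_on_const)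
      then have "{M \<in> borel_prob_measures. (\<integral>x. (\<lambda>_. 0::real) x \<partial>M) \<in> UNIV} \<in> Sb"
        unfolding Sb_def mem_Collect_eq by (intro exI[of _ "\<lambda>_. 0::real"] exI[of _ UNIV]) auto
      then show "M \<in> \<Union>Sb" using M by blast
    qed
    ultimately show ?thesis unfolding wt topology_generated_by_topspace by blast
  qed
  have cBc: "countable Bc"
  proof -
    have "Bc = (\<lambda>(h,a,b). {M \<in> borel_prob_measures. (\<integral>x. h x \<partial>M) \<in> {a<..<b}}) ` (H \<times> \<rat> \<times> \<rat>)"
      unfolding Bc_def by auto
    moreover have cS: "countable (H \<times> \<rat> \<times> (\<rat>::real set))"
      by (intro countable_SIGMA Hc countable_rat)
    ultimately show ?thesis by (simp only:) (rule countable_image[OF cS])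
  qed
  have cBB: "countable BB"
  proof -
    have "BB = (\<lambda>T. borel_prob_measures \<inter> \<Inter>T) ` {T. T \<subseteq> Bc \<and> finite T}"
      unfolding BB_def by blast
    moreover have "{T. T \<subseteq> Bc \<and> finite T} = {T. finite T \<and> T \<subseteq> Bc}" by blast
    ultimately show ?thesis using countable_Collect_finite_subset[OF cBc] by (simp only:) (rule countable_image)
  qed
  have nb: "\<forall>M\<in>Op. \<exists>b\<in>BB. M \<in> b \<and> b \<subseteq> Op" if "openin (weak_topology :: 'k measure topology) Op" for Op
    by (rule nbhd_lemma[OF cK HC Happ Sb_def Bc_def BB_def])
       (use that in \<open>simp add: wt openin_topology_generated_by_iff\<close>)
  define \<Phi> where "\<Phi> = (\<lambda>(x,y). W x y)"
  have \<Phi>p: "\<Phi> p = W (fst p) (snd p)" for p unfolding \<Phi>_def by (simp add: split_beta)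
  have \<Phi>sp: "\<Phi> p \<in> borel_prob_measures" if "p \<in> space unit_square" for p
    using that Wp unfolding \<Phi>p sq by (auto simp: mem_Times_iff)
  have tm: "\<Phi> -` t \<inter> space unit_square \<in> sets unit_square" if "t \<in> Bc" for t
  proof -
    obtain h a b where t: "t = {M \<in> borel_prob_measures. (\<integral>x. h x \<partial>M) \<in> {a<..<b}}" and h: "h \<in> H"
      using \<open>t \<in> Bc\<close> unfolding Bc_def by blast
    have "\<Phi> -` t \<inter> space unit_square = (\<lambda>p. \<integral>z. h z \<partial>W (fst p) (snd p)) -` {a<..<b} \<inter> space unit_square"
      using \<Phi>sp unfolding t \<Phi>p by auto
    also have "\<dots> \<in> sets unit_square"
      using intg[of h] h HC by (intro measurable_sets[of _ _ borel]) auto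
    finally show ?thesis .
  qed
  have Tm: "\<Phi> -` (borel_prob_measures \<inter> \<Inter>T) \<inter> space unit_square \<in> sets unit_square"
    if "finite T" "T \<subseteq> Bc" for T
    using that
  proof (induction T rule: finite_induct)
    case empty
    have "\<Phi> -` (borel_prob_measures \<inter> \<Inter>{}) \<inter> space unit_square = space unit_square"
      using \<Phi>sp by auto
    then show ?case by simp
  next
    case (insert t T)
    have "\<Phi> -` (borel_prob_measures \<inter> \<Inter>(insert t T)) \<inter> space unit_square =
          (\<Phi> -` t \<inter> space unit_square) \<inter> (\<Phi> -` (borel_prob_measures \<inter> \<Inter>T) \<inter> space unit_square)"
      by auto
    then show ?case using insert tm by auto
  qed
  have BBm: "\<Phi> -` b \<inter> space unit_square \<in> sets unit_square" if "b \<in> BB" for b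
  proof -
    obtain T where "b = borel_prob_measures \<inter> \<Inter>T" "T \<subseteq> Bc" "finite T"
      using \<open>b \<in> BB\<close> unfolding BB_def by blast
    then show ?thesis using Tm by simp
  qed
  have meas: "\<Phi> \<in> unit_square \<rightarrow>\<^sub>M borel_of (weak_topology :: 'k measure topology)"
    unfolding borel_of_def top
  proof (rule measurable_measure_of)
    show "{U. openin (weak_topology :: 'k measure topology) U} \<subseteq> Pow borel_prob_measures"
      using openin_subset top by auto
    show "\<Phi> \<in> space unit_square \<rightarrow> borel_prob_measures" using \<Phi>sp by auto
    fix y assume "y \<in> {U. openin (weak_topology :: 'k measure topology) U}"
    then have y: "\<forall>M\<in>y. \<exists>b\<in>BB. M \<in> b \<and> b \<subseteq> y" using nb by auto
    have "\<Phi> -` y \<inter> space unit_square = (\<Union>b\<in>{b\<in>BB. b \<subseteq> y}. \<Phi> -` b \<inter> space unit_square)"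
      using y by blast
    also have "\<dots> \<in> sets unit_square"
      using cBB BBm by (intro sets.countable_UN'') auto
    finally show "\<Phi> -` y \<inter> space unit_square \<in> sets unit_square" .
  qed
  have "K_graphon W"
    unfolding K_graphon_def using meas Wsym unfolding \<Phi>_def by auto
  moreover have "\<forall>f\<in>F. \<forall>x\<in>{0..1}. \<forall>y\<in>{0..1}. (\<integral>z. f z \<partial>(W x y)) = w f x y"
    using Wp by auto
  ultimately show ?thesis by blast
qed

end
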